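(* Let $d \ge 1$ be an integer, let $X_0, X_1, \dots$ be independent random variables each taking values $0$ and $1$ with probability $1/2$ each, and let $$P_d = P\Big(\exists N > 0 : \sum_{k=0}^{N-1} X_k < \tfrac{1}{d} N\Big).$$ Then $P_1 = P_2 = 1$, and for $d > 2$ the polynomial $g_d(z) = z^d - 2z + 1$ has exactly one root in the open unit disk, this root is real and lies in $(1/2,1)$, and $P_d$ equals this root. *)

theory Defs
  imports "HOL-Probability.Probability"
begin

definition ruin_event :: "'a measure \<Rightarrow> (nat \<Rightarrow> 'a \<Rightarrow> nat) \<Rightarrow> nat \<Rightarrow> 'a set" where
  "ruin_event M X d = {\<omega> \<in> space M. \<exists>N>0. real (\<Sum>k<N. X k \<omega>) < real N / real d}"

end

theory Submission
  imports Defs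
begin


fun bb :: "nat \<Rightarrow> nat \<Rightarrow> nat \<Rightarrow> real" where
  "bb d n 0 = 1"
| "bb d 0 (Suc k) = 0"
| "bb d (Suc n) (Suc k) = (bb d n k + bb d n (k + d)) / 2"

fun hit :: "nat \<Rightarrow> nat \<Rightarrow> nat \<Rightarrow> (nat \<Rightarrow> nat) \<Rightarrow> bool" where
  "hit d n 0 x = True"
| "hit d 0 (Suc k) x = False"
| "hit d (Suc n) (Suc k) x = (if x 0 = 0 then hit d n k (\<lambda>i. x (Suc i)) else hit d n (k + d) (\<lambda>i. x (Suc i)))"

lemma bb_nonneg: "0 \<le> bb d n k"
  by (induction d n k rule: bb.induct) auto

lemma bb_le1: "bb d n k \<le> 1"
  by (induction d n k rule: bb.induct) auto

lemma bb_mono_Suc: "bb d n k \<le> bb d (Suc n) k"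
proof (induction n arbitrary: k)
  case 0 then show ?case by (cases k) (auto simp: bb_nonneg)
next
  case (Suc n) then show ?case
    by (cases k) (auto intro: add_mono divide_right_mono simp del: bb.simps(3) simp: bb.simps(3)[of d "Suc n"] bb.simps(3)[of d n])
qed

lemma bb_mono: "n \<le> m \<Longrightarrow> bb d n k \<le> bb d m k"
  by (induction m rule: dec_induct) (auto intro: order_trans bb_mono_Suc)

lemma bb_super: "bb d n1 k1 * bb d n2 k2 \<le> bb d (n1 + n2) (k1 + k2)"
proof (induction n1 arbitrary: k1)
  case 0 then show ?case by (cases k1) (auto simp: bb_nonneg)
next
  case (Suc n1)
  show ?case
  proof (cases k1)
    case 0 then show ?thesis using bb_mono[of n2 "Suc n1 + n2" d k2] by simp
  next
    case (Suc k)
    have "bb d (Suc n1) k1 * bb d n2 k2 = (bb d n1 k * bb d n2 k2 + bb d n1 (k + d) * bb d n2 k2) / 2"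
      using Suc by (simp add: field_simps)
    also have "\<dots> \<le> (bb d (n1 + n2) (k + k2) + bb d (n1 + n2) (k + d + k2)) / 2"
      using Suc.IH[of k] Suc.IH[of "k+d"] by simp
    also have "\<dots> = bb d (Suc n1 + n2) (k1 + k2)"
      using Suc by (simp add: ac_simps)
    finally show ?thesis .
  qed
qed

lemma bb_pow: "bb d m 1 ^ j \<le> bb d (j * m) j"
proof (induction j)
  case 0 then show ?case by simp
next
  case (Suc j)
  have "bb d m 1 ^ Suc j = bb d m 1 * bb d m 1 ^ j" by simp
  also have "\<dots> \<le> bb d m 1 * bb d (j*m) j" using Suc bb_nonneg by (intro mult_left_mono) auto
  also have "\<dots> \<le> bb d (m + j*m) (1 + j)" by (rule bb_super)
  finally show ?case by simp
qed

lemma bb_upper: assumes "0 \<le> r" "2 * r = 1 + r ^ d" shows "bb d n k \<le> r ^ k"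
proof (induction n arbitrary: k)
  case 0 then show ?case using assms by (cases k) auto
next
  case (Suc n)
  show ?case
  proof (cases k)
    case 0 then show ?thesis by simp
  next
    case (Suc k')
    have "bb d (Suc n) k = (bb d n k' + bb d n (k' + d)) / 2" using Suc by simp
    also have "\<dots> \<le> (r ^ k' + r ^ (k' + d)) / 2"
      using Suc.IH[of k'] Suc.IH[of "k'+d"] by auto
    also have "\<dots> = r ^ k' * ((1 + r ^ d) / 2)" by (simp add: power_add field_simps)
    also have "(1 + r ^ d) / 2 = r" using assms(2) by (simp add: field_simps)
    finally show ?thesis using Suc by (simp add: mult.commute)
  qed
qed

lemma hit_iff:
  assumes "\<And>i. x i \<in> {0, 1}"
  shows "hit d n k x \<longleftrightarrow> (\<exists>N\<le>n. d * (\<Sum>i<N. x i) + k \<le> N)"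
  using assms
proof (induction n arbitrary: k x)
  case 0 then show ?case by (cases k) auto
next
  case (Suc n)
  show ?case
  proof (cases k)
    case 0 then show ?thesis by auto
  next
    case (Suc k')
    have sh: "(\<Sum>i<Suc N. x i) = x 0 + (\<Sum>i<N. x (Suc i))" for N
      by (subst sum.lessThan_Suc_shift) simp
    have ex: "(\<exists>N\<le>Suc n. d * (\<Sum>i<N. x i) + Suc k' \<le> N) \<longleftrightarrow>
        (\<exists>N\<le>n. d * (x 0 + (\<Sum>i<N. x (Suc i))) + Suc k' \<le> Suc N)"
    proof
      assume "\<exists>N\<le>Suc n. d * (\<Sum>i<N. x i) + Suc k' \<le> N"
      then obtain N where N: "N \<le> Suc n" "d * (\<Sum>i<N. x i) + Suc k' \<le> N" by blast
      then obtain N' where "N = Suc N'" by (cases N) auto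
      then show "\<exists>N\<le>n. d * (x 0 + (\<Sum>i<N. x (Suc i))) + Suc k' \<le> Suc N"
        using N sh by (intro exI[of _ N']) auto
    next
      assume "\<exists>N\<le>n. d * (x 0 + (\<Sum>i<N. x (Suc i))) + Suc k' \<le> Suc N"
      then obtain N where "N \<le> n" "d * (x 0 + (\<Sum>i<N. x (Suc i))) + Suc k' \<le> Suc N" by blast
      then show "\<exists>N\<le>Suc n. d * (\<Sum>i<N. x i) + Suc k' \<le> N"
        using sh by (intro exI[of _ "Suc N"]) auto
    qed
    have xs: "\<And>i. x (Suc i) \<in> {0,1}" using Suc.prems by auto
    show ?thesis
    proof (cases "x 0 = 0")
      case True
      then show ?thesis unfolding \<open>k = Suc k'\<close> ex using Suc.IH[OF xs, of k'] by simp
    next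
      case False
      then have "x 0 = 1" using Suc.prems[of 0] by auto
      then show ?thesis unfolding \<open>k = Suc k'\<close> ex using Suc.IH[OF xs, of "k' + d"] False
        by (simp add: algebra_simps)
    qed
  qed
qed



definition Ev :: "'a measure \<Rightarrow> (nat \<Rightarrow> 'a \<Rightarrow> nat) \<Rightarrow> nat \<Rightarrow> 'a set set" where
  "Ev M X i = (\<lambda>A. X i -` A \<inter> space M) ` UNIV"

lemma Ev_eq: "{X i -` A \<inter> space M | A. A \<in> sets (count_space UNIV)} = Ev M X i"
  unfolding Ev_def by (auto simp: image_def)

lemma Ev_mem: "X i -` B \<inter> space M \<in> Ev M X i"
  unfolding Ev_def by (rule rangeI)

lemma Ev_Pow: "Ev M X i \<subseteq> Pow (space M)"
  unfolding Ev_def by auto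

lemma UN_Ev_Pow: "(\<Union>i\<in>I. Ev M X i) \<subseteq> Pow (space M)"
  using Ev_Pow by blast

lemma sig_mono: "m \<le> m' \<Longrightarrow> sigma_sets (space M) (\<Union>i\<in>{m'..}. Ev M X i) \<subseteq> sigma_sets (space M) (\<Union>i\<in>{m..}. Ev M X i)"
  by (intro sigma_sets_subseteq UN_mono) auto

lemma Ev_in_sig: "m \<le> i \<Longrightarrow> X i -` B \<inter> space M \<in> sigma_sets (space M) (\<Union>i\<in>{m..}. Ev M X i)"
  by (rule sigma_sets.Basic, rule UN_I[of i], simp, rule Ev_mem)

lemma hit_sets:
  fixes X :: "nat \<Rightarrow> 'a \<Rightarrow> nat"
  shows "{\<omega>\<in>space M. hit d n k (\<lambda>i. X (i + m) \<omega>)} \<in> sigma_sets (space M) (\<Union>i\<in>{m..}. Ev M X i)"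
proof (induction n arbitrary: k m)
  case 0 then show ?case
    by (cases k) (simp_all add: sigma_sets_top sigma_sets.Empty)
next
  case (Suc n)
  show ?case
  proof (cases k)
    case 0 then show ?thesis by (simp add: sigma_sets_top)
  next
    case (Suc k')
    have eq: "{\<omega>\<in>space M. hit d (Suc n) k (\<lambda>i. X (i + m) \<omega>)} =
       ((X m -` {0} \<inter> space M) \<inter> {\<omega>\<in>space M. hit d n k' (\<lambda>i. X (i + Suc m) \<omega>)}) \<union>
       ((space M - (X m -` {0} \<inter> space M)) \<inter> {\<omega>\<in>space M. hit d n (k' + d) (\<lambda>i. X (i + Suc m) \<omega>)})"
      using Suc by auto
    have S1: "{\<omega>\<in>space M. hit d n k' (\<lambda>i. X (i + Suc m) \<omega>)} \<in> sigma_sets (space M) (\<Union>i\<in>{m..}. Ev M X i)"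
      by (rule subsetD[OF sig_mono Suc.IH]) simp
    have S2: "{\<omega>\<in>space M. hit d n (k' + d) (\<lambda>i. X (i + Suc m) \<omega>)} \<in> sigma_sets (space M) (\<Union>i\<in>{m..}. Ev M X i)"
      by (rule subsetD[OF sig_mono Suc.IH]) simp
    have A0: "X m -` {0} \<inter> space M \<in> sigma_sets (space M) (\<Union>i\<in>{m..}. Ev M X i)"
      by (rule Ev_in_sig) simp
    interpret F: sigma_algebra "space M" "sigma_sets (space M) (\<Union>i\<in>{m..}. Ev M X i)"
      by (rule sigma_algebra_sigma_sets[OF UN_Ev_Pow])
    show ?thesis unfolding eq by (intro F.Un F.Int F.Diff F.top A0 S1 S2)
  qed
qed


lemma Int_stable_Ev: "Int_stable (Ev M X i)"
  unfolding Int_stable_def Ev_def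
proof (intro ballI)
  fix a b assume "a \<in> range (\<lambda>A. X i -` A \<inter> space M)" "b \<in> range (\<lambda>A. X i -` A \<inter> space M)"
  then obtain A B where "a = X i -` A \<inter> space M" "b = X i -` B \<inter> space M" by blast
  then have "a \<inter> b = X i -` (A \<inter> B) \<inter> space M" by blast
  then show "a \<inter> b \<in> range (\<lambda>A. X i -` A \<inter> space M)" by (rule image_eqI) simp
qed

context prob_space begin

lemma hit_prob:
  fixes X :: "nat \<Rightarrow> 'a \<Rightarrow> nat"
  assumes ind: "indep_vars (\<lambda>_. count_space UNIV) X UNIV"
    and vals: "\<And>k. \<forall>\<omega>\<in>space M. X k \<omega> \<in> {0,1}"
    and p0: "\<And>k. prob {\<omega>\<in>space M. X k \<omega> = 0} = 1/2"
    and p1: "\<And>k. prob {\<omega>\<in>space M. X k \<omega> = 1} = 1/2"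
  shows "prob {\<omega>\<in>space M. hit d n k (\<lambda>i. X (i + m) \<omega>)} = bb d n k"
proof -
  have rv: "\<And>i. X i \<in> measurable M (count_space UNIV)" and ind2: "indep_sets (Ev M X) UNIV"
    using ind unfolding indep_vars_def2 Ev_eq by auto
  have Eev: "\<And>i. Ev M X i \<subseteq> events" unfolding Ev_def using rv by (auto intro: measurable_sets)
  then have UEev: "\<And>m. (\<Union>i\<in>{m..}. Ev M X i) \<subseteq> events" by blast
  have ev: "\<And>m d n k. {\<omega>\<in>space M. hit d n k (\<lambda>i. X (i + m) \<omega>)} \<in> events"
    using hit_sets sets.sigma_sets_subset[OF UEev] by blast
  have indep: "indep_set (sigma_sets (space M) (Ev M X m)) (sigma_sets (space M) (\<Union>i\<in>{Suc m..}. Ev M X i))" for m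
  proof -
    have "indep_sets (\<lambda>b. sigma_sets (space M) (\<Union>i\<in>case_bool {m} {Suc m..} b. Ev M X i)) UNIV"
    proof (rule indep_sets_collect_sigma)
      show "indep_sets (Ev M X) (\<Union>b. case_bool {m} {Suc m..} b)"
        by (rule indep_sets_mono_index[OF _ ind2]) simp
      show "disjoint_family (case_bool {m} {Suc m..})"
        unfolding disjoint_family_on_def by (auto split: bool.split)
      fix i
      show "Int_stable (Ev M X i)" by (rule Int_stable_Ev)
    qed
    also have "(\<lambda>b. sigma_sets (space M) (\<Union>i\<in>case_bool {m} {Suc m..} b. Ev M X i)) =
      case_bool (sigma_sets (space M) (Ev M X m)) (sigma_sets (space M) (\<Union>i\<in>{Suc m..}. Ev M X i))"
      by (rule ext) (simp split: bool.split)
    finally show ?thesis unfolding indep_set_def .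
  qed
  show ?thesis
  proof (induction n arbitrary: k m)
    case 0 then show ?case by (cases k) (simp_all add: prob_space)
  next
    case (Suc n)
    show ?case
    proof (cases k)
      case 0 then show ?thesis by (simp add: prob_space)
    next
      case (Suc k')
      define A0 where "A0 = X m -` {0} \<inter> space M"
      define A1 where "A1 = X m -` {1} \<inter> space M"
      define S1 where "S1 = {\<omega>\<in>space M. hit d n k' (\<lambda>i. X (i + Suc m) \<omega>)}"
      define S2 where "S2 = {\<omega>\<in>space M. hit d n (k' + d) (\<lambda>i. X (i + Suc m) \<omega>)}"
      have A0E: "A0 \<in> sigma_sets (space M) (Ev M X m)" unfolding A0_def by (intro sigma_sets.Basic Ev_mem)
      have A1E: "A1 \<in> sigma_sets (space M) (Ev M X m)" unfolding A1_def by (intro sigma_sets.Basic Ev_mem)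
      have S1E: "S1 \<in> sigma_sets (space M) (\<Union>i\<in>{Suc m..}. Ev M X i)" unfolding S1_def by (rule hit_sets)
      have S2E: "S2 \<in> sigma_sets (space M) (\<Union>i\<in>{Suc m..}. Ev M X i)" unfolding S2_def by (rule hit_sets)
      have "A0 = {\<omega>\<in>space M. X m \<omega> = 0}" unfolding A0_def by blast
      then have pA0: "prob A0 = 1/2" using p0[of m] by simp
      have "A1 = {\<omega>\<in>space M. X m \<omega> = 1}" unfolding A1_def by blast
      then have pA1: "prob A1 = 1/2" using p1[of m] by simp
      have eq: "{\<omega>\<in>space M. hit d (Suc n) k (\<lambda>i. X (i + m) \<omega>)} = (A0 \<inter> S1) \<union> (A1 \<inter> S2)"
        using Suc vals[of m] unfolding A0_def A1_def S1_def S2_def by auto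
      have A0ev: "A0 \<in> events" "A1 \<in> events" unfolding A0_def A1_def using rv[of m] by (auto intro: measurable_sets)
      have evs: "A0 \<inter> S1 \<in> events" "A1 \<inter> S2 \<in> events"
        using A0ev ev[of d n k' "Suc m"] ev[of d n "k' + d" "Suc m"] unfolding S1_def S2_def
        by (auto intro!: sets.Int simp del: add_Suc_right)
      have dj: "(A0 \<inter> S1) \<inter> (A1 \<inter> S2) = {}" unfolding A0_def A1_def by auto
      have "prob {\<omega>\<in>space M. hit d (Suc n) k (\<lambda>i. X (i + m) \<omega>)} = prob (A0 \<inter> S1) + prob (A1 \<inter> S2)"
        unfolding eq by (rule finite_measure_Union[OF evs dj])
      also have "\<dots> = prob A0 * prob S1 + prob A1 * prob S2"
        using indep_setD[OF indep A0E S1E] indep_setD[OF indep A1E S2E] by simp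
      also have "\<dots> = bb d (Suc n) k"
        using Suc.IH[of k' "Suc m"] Suc.IH[of "k' + d" "Suc m"] \<open>k = Suc k'\<close>
        unfolding S1_def S2_def by (simp add: pA0 pA1 field_simps)
      finally show ?thesis .
    qed
  qed
qed

end



definition pp :: "nat \<Rightarrow> real \<Rightarrow> real" where
  "pp d x = (\<Sum>i\<in>{1..<d}. x ^ i) - 1"

lemma geo_aux: "1 \<le> d \<Longrightarrow> (x - 1) * (\<Sum>i\<in>{1..<d}. x ^ i) = x ^ d - (x::real)"
proof (induction d)
  case 0 then show ?case by simp
next
  case (Suc d)
  show ?case
  proof (cases "d = 0")
    case True then show ?thesis by simp
  next
    case False
    then have "(\<Sum>i\<in>{1..<Suc d}. x ^ i) = (\<Sum>i\<in>{1..<d}. x ^ i) + x ^ d"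
      by (simp add: sum.atLeastLessThan_Suc)
    then show ?thesis using Suc False by (simp add: algebra_simps)
  qed
qed

lemma g_factor: "1 \<le> d \<Longrightarrow> x ^ d - 2 * x + 1 = (x - 1) * pp d (x::real)"
  unfolding pp_def using geo_aux[of d x] by (simp add: algebra_simps)

lemma pp_strict_mono: assumes "0 \<le> x" "x < y" "2 \<le> d" shows "pp d x < pp d y"
proof -
  have "(\<Sum>i\<in>{1..<d}. x ^ i) < (\<Sum>i\<in>{1..<d}. y ^ i)"
  proof (rule sum_strict_mono_ex1)
    show "\<forall>i\<in>{1..<d}. x ^ i \<le> y ^ i" using assms by (auto intro: power_mono)
    show "\<exists>i\<in>{1..<d}. x ^ i < y ^ i" using assms by (intro bexI[of _ 1]) auto
  qed simp
  then show ?thesis unfolding pp_def by simp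
qed

lemma pp_one: "pp d 1 = real d - 2" if "1 \<le> d"
  using that unfolding pp_def by (simp add: of_nat_diff)

lemma root_exists:
  assumes "2 < d"
  shows "\<exists>r. 1/2 < r \<and> r < 1 \<and> pp d r = 0"
proof -
  have d1: "1 \<le> d" using assms by simp
  have "(1/2::real) ^ d - 2 * (1/2) + 1 = (1/2 - 1) * pp d (1/2)" by (rule g_factor[OF d1])
  moreover have "(0::real) < (1/2) ^ d" by simp
  ultimately have a: "pp d (1/2) < 0" by simp
  have b: "0 < pp d 1" using pp_one[OF d1] assms by simp
  have "continuous_on {1/2..1} (pp d)" unfolding pp_def by (intro continuous_intros)
  then obtain r where r: "1/2 \<le> r" "r \<le> 1" "pp d r = 0"
    using IVT'[of "pp d" "1/2" 0 1] a b by force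
  have n1: "r \<noteq> 1/2"
  proof
    assume "r = 1/2" with a r(3) show False by simp
  qed
  have n2: "r \<noteq> 1" using b r(3) by auto
  have "1/2 < r" using r(1) n1 by linarith
  moreover have "r < 1" using r(2) n2 by linarith
  ultimately show ?thesis using r(3) by blast
qed

lemma root_deriv:
  assumes "2 < d" "0 < r" "r < 1" "pp d r = 0"
  shows "real d * r ^ (d - 1) < 2"
proof -
  have s: "(\<Sum>i\<in>{1..<d}. r ^ i) = 1" using assms(4) unfolding pp_def by simp
  have "(\<Sum>i\<in>{1..<d}. r ^ (d - 1)) < (\<Sum>i\<in>{1..<d}. r ^ i)"
  proof (rule sum_strict_mono_ex1)
    show "\<forall>i\<in>{1..<d}. r ^ (d - 1) \<le> r ^ i"
    proof
      fix i assume "i \<in> {1..<d}"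
      then have "i \<le> d - 1" by auto
      then show "r ^ (d - 1) \<le> r ^ i" by (rule power_decreasing) (use assms in auto)
    qed
    show "\<exists>i\<in>{1..<d}. r ^ (d - 1) < r ^ i"
    proof (rule bexI[of _ 1])
      show "r ^ (d - 1) < r ^ 1" using assms by (intro power_strict_decreasing) auto
    qed (use assms in simp)
  qed simp
  then have "real (d - 1) * r ^ (d - 1) < 1" using s by simp
  moreover have "r ^ (d - 1) \<le> 1" using assms by (auto intro: power_le_one)
  moreover have "real d = real (d - 1) + 1" using assms by simp
  ultimately have "real d * r ^ (d - 1) = real (d - 1) * r ^ (d - 1) + r ^ (d - 1)"
    by (metis distrib_right mult_1)
  then show ?thesis using \<open>real (d - 1) * r ^ (d - 1) < 1\<close> \<open>r ^ (d - 1) \<le> 1\<close> by linarith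
qed


lemma bb_limit:
  assumes lim: "(\<lambda>n. bb d n 1) \<longlonglongrightarrow> q"
  shows "1 + q ^ d \<le> 2 * q" "0 \<le> q" "q \<le> 1" "\<And>r. 0 \<le> r \<Longrightarrow> 2 * r = 1 + r ^ d \<Longrightarrow> q \<le> r"
proof -
  have inc: "incseq (\<lambda>n. bb d n 1)" by (rule incseq_SucI) (rule bb_mono_Suc)
  have le: "bb d n 1 \<le> q" for n by (rule incseq_le[OF inc lim])
  have step: "(1 + bb d m 1 ^ d) / 2 \<le> q" for m
  proof -
    have "bb d (Suc (d * m)) (Suc 0) = (1 + bb d (d * m) d) / 2"
      by (simp only: bb.simps(3) bb.simps(1) add_0)
    moreover have "bb d m 1 ^ d \<le> bb d (d * m) d" using bb_pow[of d m d] by simp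
    moreover have "bb d (Suc (d * m)) 1 \<le> q" by (rule le)
    ultimately show ?thesis by simp
  qed
  have "(\<lambda>m. (1 + bb d m 1 ^ d) / 2) \<longlonglongrightarrow> (1 + q ^ d) / 2"
    by (intro tendsto_intros lim) simp
  then have "(1 + q ^ d) / 2 \<le> q" by (rule LIMSEQ_le_const2) (use step in blast)
  then show "1 + q ^ d \<le> 2 * q" by simp
  show "0 \<le> q" by (rule LIMSEQ_le_const[OF lim]) (use bb_nonneg in blast)
  show "q \<le> 1" by (rule LIMSEQ_le_const2[OF lim]) (use bb_le1 in blast)
  fix r :: real assume "0 \<le> r" "2 * r = 1 + r ^ d"
  then have "bb d n 1 \<le> r" for n using bb_upper[of r d n 1] by simp
  then show "q \<le> r" by (intro LIMSEQ_le_const2[OF lim]) blast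
qed

lemma complex_roots:
  assumes d: "2 < d" and r: "1/2 < r" "r < 1" "pp d r = 0"
  shows "{z::complex. cmod z < 1 \<and> z ^ d - 2 * z + 1 = 0} = {complex_of_real r}"
proof (intro equalityI subsetI)
  have d1: "1 \<le> d" using d by simp
  have gr: "r ^ d - 2 * r + 1 = 0" using g_factor[OF d1, of r] r(3) by simp
  have der: "real d * r ^ (d - 1) < 2" using root_deriv[OF d _ r(2) r(3)] r(1) by simp
  fix z assume "z \<in> {z::complex. cmod z < 1 \<and> z ^ d - 2 * z + 1 = 0}"
  then have z: "cmod z < 1" "z ^ d - 2 * z + 1 = 0" by auto
  define \<rho> where "\<rho> = cmod z"
  have "2 * z = (1 + z ^ d) - (z ^ d - 2 * z + 1)" by (simp add: algebra_simps)
  with z(2) have z2: "2 * z = 1 + z ^ d" by simp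
  have "2 * \<rho> = cmod (2 * z)" unfolding \<rho>_def by (simp add: norm_mult)
  also have "\<dots> = cmod (1 + z ^ d)" using z2 by simp
  also have "\<dots> \<le> 1 + \<rho> ^ d" unfolding \<rho>_def using norm_triangle_ineq[of 1 "z ^ d"] by (simp add: norm_power)
  finally have "2 * \<rho> \<le> 1 + \<rho> ^ d" .
  then have "0 \<le> (\<rho> - 1) * pp d \<rho>" using g_factor[OF d1, of \<rho>] by simp
  moreover have "\<rho> - 1 < 0" using z(1) \<rho>_def by simp
  ultimately have ppn: "pp d \<rho> \<le> 0" by (meson mult_neg_pos not_le)
  have \<rho>r: "\<rho> \<le> r"
  proof (rule ccontr)
    assume "\<not> \<rho> \<le> r"
    then have "pp d r < pp d \<rho>" using r d by (intro pp_strict_mono) auto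
    then show False using ppn r(3) by simp
  qed
  have \<rho>0: "0 \<le> \<rho>" unfolding \<rho>_def by simp
  define R where "R = complex_of_real r"
  have "complex_of_real (r ^ d - 2 * r + 1) = 0" using gr by simp
  then have "R ^ d - 2 * R + 1 = 0" unfolding R_def by simp
  moreover have "2 * R = (1 + R ^ d) - (R ^ d - 2 * R + 1)" by (simp add: algebra_simps)
  ultimately have R2: "2 * R = 1 + R ^ d" by simp
  have "2 * (z - R) = z ^ d - R ^ d" using z2 R2 by (simp add: algebra_simps)
  also have "\<dots> = (z - R) * (\<Sum>i<d. R ^ (d - Suc i) * z ^ i)" by (rule power_diff_sumr2)
  finally have eq: "2 * (z - R) = (z - R) * (\<Sum>i<d. R ^ (d - Suc i) * z ^ i)" .
  have "cmod (\<Sum>i<d. R ^ (d - Suc i) * z ^ i) \<le> (\<Sum>i<d. cmod (R ^ (d - Suc i) * z ^ i))"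
    by (rule norm_sum)
  also have "\<dots> \<le> (\<Sum>i<d. r ^ (d - 1))"
  proof (rule sum_mono)
    fix i assume i: "i \<in> {..<d}"
    have "cmod (R ^ (d - Suc i) * z ^ i) = r ^ (d - Suc i) * \<rho> ^ i"
      unfolding R_def \<rho>_def using r by (simp add: norm_mult norm_power)
    also have "\<dots> \<le> r ^ (d - Suc i) * r ^ i"
      using \<rho>r \<rho>0 r by (intro mult_left_mono power_mono) auto
    also have "\<dots> = r ^ (d - 1)" using i by (simp add: power_add[symmetric])
    finally show "cmod (R ^ (d - Suc i) * z ^ i) \<le> r ^ (d - 1)" .
  qed
  also have "\<dots> = real d * r ^ (d - 1)" by simp
  finally have bnd: "cmod (\<Sum>i<d. R ^ (d - Suc i) * z ^ i) \<le> real d * r ^ (d - 1)" .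
  have "2 * cmod (z - R) = cmod (z - R) * cmod (\<Sum>i<d. R ^ (d - Suc i) * z ^ i)"
  proof -
    have "cmod (2 * (z - R)) = cmod ((z - R) * (\<Sum>i<d. R ^ (d - Suc i) * z ^ i))" by (rule arg_cong[OF eq])
    then show ?thesis by (simp only: norm_mult norm_numeral)
  qed
  also have "\<dots> \<le> cmod (z - R) * (real d * r ^ (d - 1))"
    using bnd by (intro mult_left_mono) auto
  finally have "2 * cmod (z - R) \<le> cmod (z - R) * (real d * r ^ (d - 1))" .
  then have "cmod (z - R) = 0"
  proof (rule contrapos_pp)
    assume "cmod (z - R) \<noteq> 0"
    then have "0 < cmod (z - R)" by simp
    then have "cmod (z - R) * (real d * r ^ (d - 1)) < cmod (z - R) * 2"
      using der by (rule mult_strict_left_mono[rotated])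
    then show "\<not> 2 * cmod (z - R) \<le> cmod (z - R) * (real d * r ^ (d - 1))" by linarith
  qed
  then show "z \<in> {complex_of_real r}" unfolding R_def by simp
next
  have d1: "1 \<le> d" using d by simp
  have gr: "r ^ d - 2 * r + 1 = 0" using g_factor[OF d1, of r] r(3) by simp
  fix z assume "z \<in> {complex_of_real r}"
  then have zr: "z = complex_of_real r" by simp
  have "z ^ d - 2 * z + 1 = complex_of_real (r ^ d - 2 * r + 1)" unfolding zr by simp
  then have "z ^ d - 2 * z + 1 = 0" using gr by simp
  moreover have "cmod z < 1" unfolding zr using r by simp
  ultimately show "z \<in> {z::complex. cmod z < 1 \<and> z ^ d - 2 * z + 1 = 0}" by simp
qed

lemma hit_mono: "hit d n k x \<Longrightarrow> hit d (Suc n) k x"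
proof (induction n arbitrary: k x)
  case 0 then show ?case by (cases k) auto
next
  case (Suc n) then show ?case
    by (cases k) (auto split: if_splits)
qed

lemma ruin_iff_nat:
  assumes "0 < d"
  shows "(real S < real N / real d) \<longleftrightarrow> d * S < (N::nat)"
proof -
  have "(real S < real N / real d) \<longleftrightarrow> real S * real d < real N"
    using assms by (simp add: pos_less_divide_eq)
  also have "\<dots> \<longleftrightarrow> real (d * S) < real N" by (simp add: mult.commute)
  also have "\<dots> \<longleftrightarrow> d * S < N" by (rule of_nat_less_iff)
  finally show ?thesis .
qed

theorem mainTheorem5:
  fixes M :: "'a measure" and X :: "nat \<Rightarrow> 'a \<Rightarrow> nat" and d :: nat
  assumes "prob_space M"
    and "prob_space.indep_vars M (\<lambda>_. count_space UNIV) X UNIV"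
    and "\<And>k. \<forall>\<omega>\<in>space M. X k \<omega> \<in> {0, 1}"
    and "\<And>k. measure M {\<omega> \<in> space M. X k \<omega> = 0} = 1/2"
    and "\<And>k. measure M {\<omega> \<in> space M. X k \<omega> = 1} = 1/2"
    and "d \<ge> 1"
  shows "(d \<le> 2 \<longrightarrow> measure M (ruin_event M X d) = 1) \<and>
         (d > 2 \<longrightarrow> (\<exists>r::real. 1/2 < r \<and> r < 1 \<and>
             {z::complex. cmod z < 1 \<and> z ^ d - 2 * z + 1 = 0} = {complex_of_real r} \<and>
             measure M (ruin_event M X d) = r))"
proof -
  interpret prob_space M by (rule assms(1))
  note ind = assms(2) and vals = assms(3)
  have rv: "\<And>i. X i \<in> measurable M (count_space UNIV)"
    using ind unfolding indep_vars_def2 by auto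
  have Eev: "\<And>i. Ev M X i \<subseteq> events" unfolding Ev_def using rv by (auto intro: measurable_sets)
  then have UEev: "(\<Union>i\<in>{0..}. Ev M X i) \<subseteq> events" by blast
  define H where "H n = {\<omega>\<in>space M. hit d n 1 (\<lambda>i. X (i + 0) \<omega>)}" for n
  have Hev: "range H \<subseteq> events"
    using hit_sets[of M d _ 1 X 0] sets.sigma_sets_subset[OF UEev] unfolding H_def by blast
  have Hinc: "incseq H"
  proof (rule incseq_SucI)
    fix n show "H n \<subseteq> H (Suc n)" unfolding H_def using hit_mono by blast
  qed
  have d0: "0 < d" using assms(6) by simp
  have ruin: "ruin_event M X d = (\<Union>n. H n)"
  proof (intro equalityI subsetI)
    fix \<omega> assume "\<omega> \<in> ruin_event M X d"
    then obtain N where w: "\<omega> \<in> space M" "real (\<Sum>k<N. X k \<omega>) < real N / real d"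
      unfolding ruin_event_def by blast
    have "d * (\<Sum>k<N. X k \<omega>) < N" using ruin_iff_nat[OF d0, of "\<Sum>k<N. X k \<omega>" N] w(2) by blast
    then have "d * (\<Sum>k<N. X k \<omega>) + 1 \<le> N" by simp
    moreover have "\<And>i. X i \<omega> \<in> {0, 1}" using vals w(1) by blast
    ultimately have "hit d N 1 (\<lambda>i. X i \<omega>)" using hit_iff[of "\<lambda>i. X i \<omega>" d N 1] by auto
    then show "\<omega> \<in> (\<Union>n. H n)" using w(1) unfolding H_def by auto
  next
    fix \<omega> assume "\<omega> \<in> (\<Union>n. H n)"
    then obtain n where w: "\<omega> \<in> space M" "hit d n 1 (\<lambda>i. X i \<omega>)" unfolding H_def by auto
    moreover have "\<And>i. X i \<omega> \<in> {0, 1}" using vals w(1) by blast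
    ultimately obtain N where "d * (\<Sum>k<N. X k \<omega>) + 1 \<le> N"
      using hit_iff[of "\<lambda>i. X i \<omega>" d n 1] by auto
    then have "0 < N" "d * (\<Sum>k<N. X k \<omega>) < N" by auto
    then have "0 < N" "real (\<Sum>k<N. X k \<omega>) < real N / real d"
      using ruin_iff_nat[OF d0, of "\<Sum>k<N. X k \<omega>" N] by blast+
    then show "\<omega> \<in> ruin_event M X d" unfolding ruin_event_def using w(1) by blast
  qed
  have "(\<lambda>n. prob (H n)) \<longlonglongrightarrow> prob (\<Union>n. H n)"
    by (rule finite_Lim_measure_incseq[OF Hev Hinc])
  moreover have "prob (H n) = bb d n 1" for n
    unfolding H_def by (rule hit_prob[OF ind assms(3) assms(4) assms(5)])
  ultimately have lim: "(\<lambda>n. bb d n 1) \<longlonglongrightarrow> prob (ruin_event M X d)"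
    unfolding ruin by simp
  define q where "q = prob (ruin_event M X d)"
  have qs: "1 + q ^ d \<le> 2 * q" "0 \<le> q" "q \<le> 1"
    "\<And>r. 0 \<le> r \<Longrightarrow> 2 * r = 1 + r ^ d \<Longrightarrow> q \<le> r"
    using bb_limit[OF lim] unfolding q_def by auto
  show ?thesis
  proof (intro conjI impI)
    assume "d \<le> 2"
    then have "d = 1 \<or> d = 2" using assms(6) by auto
    then have "q = 1"
    proof
      assume "d = 1" then show "q = 1" using qs by simp
    next
      assume "d = 2"
      then have "(q - 1) ^ 2 \<le> 0" using qs(1) by (simp add: power2_eq_square algebra_simps)
      then have "(q - 1) ^ 2 = 0" using zero_le_power2[of "q - 1"] by linarith
      then show "q = 1" by simp
    qed
    then show "prob (ruin_event M X d) = 1" unfolding q_def .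
  next
    assume d2: "2 < d"
    obtain r where r: "1/2 < r" "r < 1" "pp d r = 0" using root_exists[OF d2] by blast
    have d1: "1 \<le> d" using d2 by simp
    have gr: "r ^ d - 2 * r + 1 = 0" using g_factor[OF d1, of r] r(3) by simp
    then have "2 * r = 1 + r ^ d" by simp
    then have qr: "q \<le> r" using qs(4)[of r] r(1) by simp
    have "r \<le> q"
    proof (rule ccontr)
      assume "\<not> r \<le> q"
      then have "q < r" by simp
      then have "pp d q < pp d r" using qs(2) d2 by (intro pp_strict_mono) auto
      then have "pp d q < 0" using r(3) by simp
      moreover have "q - 1 < 0" using \<open>q < r\<close> r(2) by simp
      ultimately have "0 < (q - 1) * pp d q" by (simp add: mult_neg_neg)
      then have "0 < q ^ d - 2 * q + 1" using g_factor[OF d1, of q] by simp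
      then show False using qs(1) by simp
    qed
    with qr have "q = r" by simp
    then show "\<exists>r::real. 1/2 < r \<and> r < 1 \<and>
             {z::complex. cmod z < 1 \<and> z ^ d - 2 * z + 1 = 0} = {complex_of_real r} \<and>
             prob (ruin_event M X d) = r"
      using r complex_roots[OF d2 r] unfolding q_def by blast
  qed
qed

end
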